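(* There is an absolute constant $C>0$ such that for all integers $n\ge 3$ and $m$ with $n-1\le m\le (n-1)^2/4$, $$\tilde{r}(\mathcal C_{\mathrm{odd}},\mathcal{C}on_{n,m})\le n+2m+C\sqrt{m-n+1}.$$
   Context: Given nonempty families $\mathcal H_1,\mathcal H_2$ of finite graphs, the online size Ramsey game $\mathcal R(\mathcal H_1,\mathcal H_2)$ is played on the edge set of the infinite complete graph $K_{\mathbb N}$: in each round Builder selects a previously unselected edge and Painter colours it red or blue. The game ends as soon as there is a red copy of some graph in $\mathcal H_1$ or a blue copy of some graph in $\mathcal H_2$. Builder tries to end the game as soon as possible, Painter tries to delay it, and $\tilde r(\mathcal H_1,\mathcal H_2)$ is the number of rounds under optimal play. $\mathcal C_{\mathrm{odd}}$ is the family of all odd cycles and $\mathcal{C}on_{n,m}$ is the family of all connected graphs with exactly $n$ vertices and at least $m$ edges. (The paper states the bound as $n+2m+O(\sqrt{m-n+1})$.) *)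

theory Defs
  imports Complex_Main
begin

text \<open>Graphs on the vertex set of the infinite complete graph K_N are represented by
  their edge sets: sets of 2-element subsets of nat.  A graph family is a set of such
  (finite) edge sets, closed under relabelling of vertices; a copy of a member of a
  family in a graph G is a subgraph (subset of edges) of G belonging to the family.\<close>

definition is_edge :: "nat set \<Rightarrow> bool" where
  "is_edge e \<longleftrightarrow> (\<exists>x y. x \<noteq> y \<and> e = {x, y})"

definition verts :: "nat set set \<Rightarrow> nat set" where
  "verts G = \<Union>G"

definition C_odd :: "nat set set set" where
  "C_odd = {G. \<exists>vs. distinct vs \<and> odd (length vs) \<and> length vs \<ge> 3 \<and>
      G = {{vs ! i, vs ! ((i + 1) mod length vs)} | i. i < length vs}}"

text \<open>The family of all connected graphs with exactly n vertices and at least m edges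
  (vertex set = set of endpoints of edges; for n >= 2 a connected graph has no isolated vertices).\<close>
definition Con :: "nat \<Rightarrow> nat \<Rightarrow> nat set set set" where
  "Con n m = {G. finite G \<and> (\<forall>e\<in>G. is_edge e) \<and> card (verts G) = n \<and> card G \<ge> m \<and>
      (\<forall>u\<in>verts G. \<forall>v\<in>verts G. (u, v) \<in> {(x, y). {x, y} \<in> G}\<^sup>*)}"

definition contains_copy :: "nat set set set \<Rightarrow> nat set set \<Rightarrow> bool" where
  "contains_copy \<H> G \<longleftrightarrow> (\<exists>H \<subseteq> G. H \<in> \<H>)"

text \<open>builder_wins H1 H2 k R B: from the position with red edges R and blue edges B,
  Builder can force the game R(H1,H2) to end within at most k further rounds,
  whatever Painter does.\<close>
inductive builder_wins :: "nat set set set \<Rightarrow> nat set set set \<Rightarrow> nat \<Rightarrow> nat set set \<Rightarrow> nat set set \<Rightarrow> bool"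
  for H1 H2 where
  ended: "contains_copy H1 R \<or> contains_copy H2 B \<Longrightarrow> builder_wins H1 H2 k R B"
| step: "\<lbrakk>is_edge e; e \<notin> R; e \<notin> B;
          builder_wins H1 H2 k (insert e R) B; builder_wins H1 H2 k R (insert e B)\<rbrakk>
         \<Longrightarrow> builder_wins H1 H2 (Suc k) R B"

text \<open>Online size Ramsey number: the number of rounds under optimal play (meaningful when
  Builder can force the end in finitely many rounds).\<close>
definition online_ramsey :: "nat set set set \<Rightarrow> nat set set set \<Rightarrow> nat" where
  "online_ramsey H1 H2 = (LEAST k. builder_wins H1 H2 k {} {})"

end

theory Submission
  imports Defs
begin


lemma bw_mono:
  assumes "builder_wins H1 H2 k R B" "k \<le> k'"
  shows "builder_wins H1 H2 k' R B"
  using assms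
proof (induction arbitrary: k' rule: builder_wins.induct)
  case (ended R B k)
  then show ?case by (intro builder_wins.ended) simp
next
  case (step e R B k)
  then obtain k0 where k0: "k' = Suc k0" "k \<le> k0" by (cases k') auto
  show ?case unfolding k0(1)
    by (rule builder_wins.step) (use step k0 in auto)
qed

lemma cc_mono: "contains_copy H G \<Longrightarrow> G \<subseteq> G' \<Longrightarrow> contains_copy H G'"
  unfolding contains_copy_def by blast

lemma odd_cycle:
  fixes ps :: "nat list"
  assumes "distinct ps" "successively (\<lambda>x y. {x,y} \<in> R) ps" "odd (length ps)" "length ps \<ge> 3"
  shows "contains_copy C_odd (insert {hd ps, last ps} R)"
proof -
  let ?G = "{{ps ! i, ps ! ((i + 1) mod length ps)} | i. i < length ps}"
  have "?G \<in> C_odd" unfolding C_odd_def using assms by blast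
  moreover have "?G \<subseteq> insert {hd ps, last ps} R"
  proof
    fix e assume "e \<in> ?G"
    then obtain i where i: "i < length ps" "e = {ps ! i, ps ! ((i + 1) mod length ps)}" by blast
    show "e \<in> insert {hd ps, last ps} R"
    proof (cases "Suc i < length ps")
      case True
      then have "(i + 1) mod length ps = Suc i" by simp
      then show ?thesis using i successively_nth[OF assms(2) True] by simp
    next
      case False
      then have "i = length ps - 1" using i by simp
      moreover have "ps \<noteq> []" using assms by auto
      ultimately have "e = {last ps, hd ps}" using i
        by (simp add: last_conv_nth hd_conv_nth)
      then show ?thesis by (simp add: insert_commute)
    qed
  qed
  ultimately show ?thesis unfolding contains_copy_def by blast
qed


definition hasp :: "nat set set \<Rightarrow> (nat \<Rightarrow> nat) \<Rightarrow> (nat \<Rightarrow> bool) \<Rightarrow> nat \<Rightarrow> nat \<Rightarrow> bool" where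
  "hasp R cmp side u v \<longleftrightarrow> (\<exists>ps. ps \<noteq> [] \<and> distinct ps \<and> hd ps = u \<and> last ps = v \<and>
     successively (\<lambda>x y. {x,y} \<in> R) ps \<and> (\<forall>z\<in>set ps. cmp z = cmp u) \<and>
     (odd (length ps) \<longleftrightarrow> side u = side v))"

definition RInv :: "nat set set \<Rightarrow> (nat \<Rightarrow> nat) \<Rightarrow> (nat \<Rightarrow> bool) \<Rightarrow> bool" where
  "RInv R cmp side \<longleftrightarrow> (\<forall>e\<in>R. \<exists>x y. e = {x,y} \<and> cmp x = cmp y \<and> side x \<noteq> side y) \<and>
     (\<forall>u v. cmp u = cmp v \<longrightarrow> hasp R cmp side u v)"

lemma merge_inv:
  assumes inv: "RInv R cmp side" and neq: "cmp u \<noteq> cmp v"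
  defines "cmp' \<equiv> (\<lambda>z. if cmp z = cmp v then cmp u else cmp z)"
  defines "side' \<equiv> (\<lambda>z. if cmp z = cmp v then (if side z = side v then \<not> side u else side u) else side z)"
  shows "RInv (insert {u,v} R) cmp' side'"
proof -
  let ?R' = "insert {u,v} R"
  have hp: "hasp R cmp side a b" if "cmp a = cmp b" for a b
    using inv that unfolding RInv_def by blast
  have sm: "successively (\<lambda>x y. {x,y} \<in> ?R') ps" if "successively (\<lambda>x y. {x,y} \<in> R) ps" for ps
    by (rule successively_mono[OF that]) auto
  have part1: "\<forall>e\<in>?R'. \<exists>x y. e = {x,y} \<and> cmp' x = cmp' y \<and> side' x \<noteq> side' y"
  proof
    fix e assume "e \<in> ?R'"
    then consider "e = {u,v}" | "e \<in> R" by blast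
    then show "\<exists>x y. e = {x,y} \<and> cmp' x = cmp' y \<and> side' x \<noteq> side' y"
    proof cases
      case 1
      have "cmp' u = cmp' v" "side' u \<noteq> side' v" using neq by (simp_all add: cmp'_def side'_def)
      then show ?thesis using 1 by blast
    next
      case 2
      then obtain x y where "e = {x,y}" "cmp x = cmp y" "side x \<noteq> side y"
        using inv[unfolded RInv_def, THEN conjunct1] by blast
      then show ?thesis unfolding cmp'_def side'_def by (intro exI[of _ x] exI[of _ y]) auto
    qed
  qed
  have cat: "hasp ?R' cmp' side' z1 z2"
    if p1: "hasp R cmp side z1 a" and p2: "hasp R cmp side b z2" and ab: "{a,b} = {u,v}"
      and c1: "cmp z1 = cmp a" and c2: "cmp z2 = cmp b" and cab: "cmp a \<noteq> cmp b"
      and par: "\<And>l1 l2::nat. (odd l1 \<longleftrightarrow> side z1 = side a) \<Longrightarrow> (odd l2 \<longleftrightarrow> side b = side z2) \<Longrightarrow>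
                 (odd (l1 + l2) \<longleftrightarrow> side' z1 = side' z2)"
      and cc: "\<And>z. cmp z = cmp a \<or> cmp z = cmp b \<Longrightarrow> cmp' z = cmp' z1"
    for z1 z2 a b
  proof -
    obtain p where p: "p \<noteq> []" "distinct p" "hd p = z1" "last p = a" "successively (\<lambda>x y. {x,y} \<in> R) p"
      "\<forall>z\<in>set p. cmp z = cmp z1" "odd (length p) \<longleftrightarrow> side z1 = side a"
      using p1 unfolding hasp_def by blast
    obtain q where q: "q \<noteq> []" "distinct q" "hd q = b" "last q = z2" "successively (\<lambda>x y. {x,y} \<in> R) q"
      "\<forall>z\<in>set q. cmp z = cmp b" "odd (length q) \<longleftrightarrow> side b = side z2"
      using p2 unfolding hasp_def by blast
    have disj: "set p \<inter> set q = {}" using p(6) q(6) c1 cab by auto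
    have e: "{a,b} \<in> ?R'" using ab by simp
    show ?thesis unfolding hasp_def
    proof (intro exI[of _ "p @ q"] conjI)
      show "p @ q \<noteq> []" using p by simp
      show "distinct (p @ q)" using p q disj by simp
      show "hd (p @ q) = z1" using p by simp
      show "last (p @ q) = z2" using q by simp
      show "successively (\<lambda>x y. {x,y} \<in> ?R') (p @ q)"
        unfolding successively_append_iff using sm[OF p(5)] sm[OF q(5)] e p(4) q(3) by blast
      show "\<forall>z\<in>set (p @ q). cmp' z = cmp' z1"
      proof
        fix z assume "z \<in> set (p @ q)"
        then have "cmp z = cmp a \<or> cmp z = cmp b" using p(6) q(6) c1 by auto
        then show "cmp' z = cmp' z1" by (rule cc)
      qed
      show "odd (length (p @ q)) \<longleftrightarrow> side' z1 = side' z2"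
        using par[OF p(7) q(7)] by simp
    qed
  qed
  have part2: "hasp ?R' cmp' side' z1 z2" if h: "cmp' z1 = cmp' z2" for z1 z2
  proof (cases "cmp z1 = cmp v")
    case T1: True
    show ?thesis
    proof (cases "cmp z2 = cmp v")
      case True
      then have "cmp z1 = cmp z2" using T1 by simp
      then obtain ps where ps: "ps \<noteq> []" "distinct ps" "hd ps = z1" "last ps = z2"
        "successively (\<lambda>x y. {x,y} \<in> R) ps" "\<forall>z\<in>set ps. cmp z = cmp z1"
        "odd (length ps) \<longleftrightarrow> side z1 = side z2"
        using hp[OF \<open>cmp z1 = cmp z2\<close>] unfolding hasp_def by blast
      show ?thesis unfolding hasp_def
      proof (intro exI[of _ ps] conjI)
        show "ps \<noteq> []" "distinct ps" "hd ps = z1" "last ps = z2" using ps by auto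
        show "successively (\<lambda>x y. {x,y} \<in> ?R') ps" by (rule sm[OF ps(5)])
        show "\<forall>z\<in>set ps. cmp' z = cmp' z1" using ps(6) T1 by (simp add: cmp'_def)
        have "side' z1 = (if side z1 = side v then \<not> side u else side u)"
             "side' z2 = (if side z2 = side v then \<not> side u else side u)"
          using T1 True by (simp_all add: side'_def)
        then have "side' z1 = side' z2 \<longleftrightarrow> side z1 = side z2"
          by (cases "side z1"; cases "side v"; cases "side u"; cases "side z2") simp_all
        then show "odd (length ps) \<longleftrightarrow> side' z1 = side' z2" using ps(7) by simp
      qed
    next
      case False
      then have c2: "cmp z2 = cmp u" using h T1 unfolding cmp'_def by (auto split: if_splits)
      show ?thesis
      proof (rule cat[of z1 v u])
        show "hasp R cmp side z1 v" using T1 by (rule hp)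
        show "hasp R cmp side u z2" using c2 by (intro hp) simp
        show "{v, u} = {u, v}" by (rule insert_commute)
        show "cmp z1 = cmp v" "cmp z2 = cmp u" "cmp v \<noteq> cmp u" using T1 c2 neq by auto
        show "odd (l1 + l2) \<longleftrightarrow> side' z1 = side' z2"
          if "odd l1 \<longleftrightarrow> side z1 = side v" "odd l2 \<longleftrightarrow> side u = side z2" for l1 l2
        proof -
          have "side' z1 = (if side z1 = side v then \<not> side u else side u)" using T1 by (simp add: side'_def)
          moreover have "side' z2 = side z2" using False by (simp add: side'_def)
          moreover have "odd (l1 + l2) \<longleftrightarrow> \<not> (odd l1 \<longleftrightarrow> odd l2)" by simp
          ultimately show ?thesis using that by (cases "side z1"; cases "side v"; cases "side u"; cases "side z2") simp_all
        qed
        show "cmp' z = cmp' z1" if "cmp z = cmp v \<or> cmp z = cmp u" for z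
          using that T1 by (auto simp: cmp'_def)
      qed
    qed
  next
    case F1: False
    show ?thesis
    proof (cases "cmp z2 = cmp v")
      case True
      then have c1: "cmp z1 = cmp u" using h F1 unfolding cmp'_def by (auto split: if_splits)
      show ?thesis
      proof (rule cat[of z1 u v])
        show "hasp R cmp side z1 u" using c1 by (rule hp)
        show "hasp R cmp side v z2" using True by (intro hp) simp
        show "{u, v} = {u, v}" by (rule refl)
        show "cmp z1 = cmp u" "cmp z2 = cmp v" "cmp u \<noteq> cmp v" using True c1 neq by auto
        show "odd (l1 + l2) \<longleftrightarrow> side' z1 = side' z2"
          if "odd l1 \<longleftrightarrow> side z1 = side u" "odd l2 \<longleftrightarrow> side v = side z2" for l1 l2
        proof -
          have "side' z2 = (if side z2 = side v then \<not> side u else side u)" using True by (simp add: side'_def)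
          moreover have "side' z1 = side z1" using F1 by (simp add: side'_def)
          moreover have "odd (l1 + l2) \<longleftrightarrow> \<not> (odd l1 \<longleftrightarrow> odd l2)" by simp
          ultimately show ?thesis using that by (cases "side z1"; cases "side v"; cases "side u"; cases "side z2") simp_all
        qed
        show "cmp' z = cmp' z1" if "cmp z = cmp u \<or> cmp z = cmp v" for z
          using that c1 neq F1 by (auto simp: cmp'_def)
      qed
    next
      case False
      then have "cmp z1 = cmp z2" using F1 h unfolding cmp'_def by simp
      then obtain ps where ps: "ps \<noteq> []" "distinct ps" "hd ps = z1" "last ps = z2"
        "successively (\<lambda>x y. {x,y} \<in> R) ps" "\<forall>z\<in>set ps. cmp z = cmp z1"
        "odd (length ps) \<longleftrightarrow> side z1 = side z2"
        using hp[OF \<open>cmp z1 = cmp z2\<close>] unfolding hasp_def by blast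
      show ?thesis unfolding hasp_def
      proof (intro exI[of _ ps] conjI)
        show "ps \<noteq> []" "distinct ps" "hd ps = z1" "last ps = z2" using ps by auto
        show "successively (\<lambda>x y. {x,y} \<in> ?R') ps" by (rule sm[OF ps(5)])
        show "\<forall>z\<in>set ps. cmp' z = cmp' z1" using ps(6) F1 by (simp add: cmp'_def)
        have "side' z1 = side z1" "side' z2 = side z2"
          using F1 False by (simp_all add: side'_def)
        then show "odd (length ps) \<longleftrightarrow> side' z1 = side' z2" using ps(7) by simp
      qed
    qed
  qed
  show ?thesis unfolding RInv_def using part1 part2 by blast
qed


definition Pairs :: "nat set \<Rightarrow> nat set set" where
  "Pairs S = {e. e \<subseteq> S \<and> card e = 2}"

lemma finite_Pairs: "finite S \<Longrightarrow> finite (Pairs S)"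
  unfolding Pairs_def by (rule finite_subset[of _ "Pow S"]) auto

lemma card_Pairs: "finite S \<Longrightarrow> card (Pairs S) = card S choose 2"
  unfolding Pairs_def by (rule n_subsets)

lemma in_Pairs: "u \<in> S \<Longrightarrow> v \<in> S \<Longrightarrow> u \<noteq> v \<Longrightarrow> {u,v} \<in> Pairs S"
  unfolding Pairs_def by auto

lemma arith_contra:
  fixes a c b m :: nat
  assumes "(a + c) choose 2 \<le> b + a * c" "b < m" "4 * m \<le> (a + c - 1)^2"
  shows False
proof -
  let ?n = "a + c"
  have ev: "even (?n * (?n - 1))" by (cases "even a"; cases "even c") auto
  have ch: "2 * (?n choose 2) = ?n * (?n - 1)" unfolding choose_two using ev by simp
  show False
  proof (cases "?n = 0")
    case True then show ?thesis using assms by simp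
  next
    case False
    define N where "N = int ?n"
    have N1: "int (?n - 1) = N - 1" using False unfolding N_def by linarith
    have e1: "N * (N - 1) \<le> 2 * int b + 2 * int a * int c"
    proof -
      have "?n * (?n - 1) \<le> 2 * b + 2 * a * c" using assms(1) ch by linarith
      then have "int (?n * (?n - 1)) \<le> int (2 * b + 2 * a * c)" by linarith
      then show ?thesis using N1 N_def by simp
    qed
    have e2: "4 * int m \<le> (N - 1)^2"
    proof -
      have "int (4 * m) \<le> int ((?n - 1)^2)" using assms(3) by linarith
      then show ?thesis using N1 by simp
    qed
    have e3: "int b + 1 \<le> int m" using assms(2) by simp
    have e4: "4 * int a * int c \<le> N^2"
    proof -
      have "0 \<le> (int a - int c)^2" by simp
      then show ?thesis unfolding N_def by (simp add: power2_eq_square algebra_simps)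
    qed
    have "N^2 + 3 \<le> 4 * int a * int c"
      using e1 e2 e3 by (simp add: power2_eq_square algebra_simps)
    then show False using e4 by simp
  qed
qed

lemma count_move:
  fixes side :: "nat \<Rightarrow> bool"
  assumes S: "finite S" "card S = n" and m: "4 * m \<le> (n - 1)^2" and b: "card (B \<inter> Pairs S) < m"
  shows "\<exists>u v. u \<in> S \<and> v \<in> S \<and> u \<noteq> v \<and> side u = side v \<and> {u,v} \<notin> B"
proof (rule ccontr)
  assume "\<not> ?thesis"
  then have H: "\<And>u v. u \<in> S \<Longrightarrow> v \<in> S \<Longrightarrow> u \<noteq> v \<Longrightarrow> side u = side v \<Longrightarrow> {u,v} \<in> B" by blast
  define A0 where "A0 = {z\<in>S. side z}"
  define A1 where "A1 = {z\<in>S. \<not> side z}"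
  define Cr where "Cr = (\<lambda>(x,y). {x,y}) ` (A0 \<times> A1)"
  have fin: "finite A0" "finite A1" using S unfolding A0_def A1_def by auto
  have sub: "Pairs S \<subseteq> (B \<inter> Pairs S) \<union> Cr"
  proof
    fix e assume e: "e \<in> Pairs S"
    then obtain x y where xy: "e = {x,y}" "x \<noteq> y" "x \<in> S" "y \<in> S"
      unfolding Pairs_def by (auto simp: card_2_iff)
    show "e \<in> (B \<inter> Pairs S) \<union> Cr"
    proof (cases "side x = side y")
      case True then show ?thesis using H xy e by auto
    next
      case False
      show ?thesis
      proof (cases "side x")
        case True
        then have "(x,y) \<in> A0 \<times> A1" using False xy unfolding A0_def A1_def by auto
        then show ?thesis unfolding Cr_def using xy by force
      next
        case F2: False
        then have "(y,x) \<in> A0 \<times> A1" using False xy unfolding A0_def A1_def by auto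
        then have "{y,x} \<in> Cr" unfolding Cr_def by force
        then show ?thesis using xy by (simp add: insert_commute)
      qed
    qed
  qed
  have "card (Pairs S) \<le> card ((B \<inter> Pairs S) \<union> Cr)"
    by (rule card_mono) (use sub S finite_Pairs fin in \<open>auto simp: Cr_def\<close>)
  also have "\<dots> \<le> card (B \<inter> Pairs S) + card Cr" by (rule card_Un_le)
  also have "card Cr \<le> card (A0 \<times> A1)" unfolding Cr_def by (rule card_image_le) (use fin in simp)
  finally have c1: "card (Pairs S) \<le> card (B \<inter> Pairs S) + card A0 * card A1"
    by (simp add: card_cartesian_product)
  have "S = A0 \<union> A1" "A0 \<inter> A1 = {}" unfolding A0_def A1_def by auto
  then have "card S = card A0 + card A1" using fin by (simp add: card_Un_disjoint)
  then have c2: "(card A0 + card A1) choose 2 \<le> card (B \<inter> Pairs S) + card A0 * card A1"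
    using c1 card_Pairs[OF S(1)] by simp
  show False
    by (rule arith_contra[OF c2 b]) (use m S \<open>card S = card A0 + card A1\<close> in simp)
qed

lemma con_win:
  assumes S: "finite S" "card S = n" "n \<ge> 2" "h \<in> S" and hub: "\<forall>w\<in>S-{h}. {h,w} \<in> B"
    and m: "m \<le> card (B \<inter> Pairs S)"
  shows "contains_copy (Con n m) B"
proof -
  let ?H = "B \<inter> Pairs S"
  have fin: "finite ?H" using finite_Pairs[OF S(1)] by simp
  have edges: "\<forall>e\<in>?H. is_edge e" unfolding Pairs_def is_edge_def by (auto simp: card_2_iff)
  have hubH: "{h,w} \<in> ?H" if "w \<in> S" "w \<noteq> h" for w
    using hub that S(4) in_Pairs[of h S w] by auto
  obtain w0 where w0: "w0 \<in> S" "w0 \<noteq> h"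
  proof -
    have "S - {h} \<noteq> {}"
    proof
      assume "S - {h} = {}"
      then have "S \<subseteq> {h}" by auto
      then have "card S \<le> 1" using card_mono[of "{h}" S] by simp
      then show False using S by simp
    qed
    then show ?thesis using that by blast
  qed
  have verts: "verts ?H = S"
  proof
    show "verts ?H \<subseteq> S" unfolding verts_def Pairs_def by auto
    show "S \<subseteq> verts ?H"
    proof
      fix s assume s: "s \<in> S"
      show "s \<in> verts ?H"
      proof (cases "s = h")
        case True then show ?thesis using hubH[OF w0] unfolding verts_def by blast
      next
        case False then show ?thesis using hubH[OF s] unfolding verts_def by blast
      qed
    qed
  qed
  let ?rel = "{(x, y). {x, y} \<in> ?H}"
  have toh: "(u, h) \<in> ?rel\<^sup>*" "(h, u) \<in> ?rel\<^sup>*" if "u \<in> S" for u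
  proof -
    show "(u, h) \<in> ?rel\<^sup>*"
    proof (cases "u = h")
      case False
      then have "{u,h} \<in> ?H" using hubH[OF that] by (simp add: insert_commute)
      then show ?thesis by auto
    qed simp
    show "(h, u) \<in> ?rel\<^sup>*"
    proof (cases "u = h")
      case False
      then have "{h,u} \<in> ?H" using hubH[OF that] by simp
      then show ?thesis by auto
    qed simp
  qed
  have conn: "\<forall>u\<in>verts ?H. \<forall>v\<in>verts ?H. (u, v) \<in> ?rel\<^sup>*"
  proof (intro ballI)
    fix u v assume "u \<in> verts ?H" "v \<in> verts ?H"
    then have "u \<in> S" "v \<in> S" using verts by auto
    then show "(u, v) \<in> ?rel\<^sup>*" using rtrancl_trans[OF toh(1) toh(2)] by blast
  qed
  have "?H \<in> Con n m" unfolding Con_def using fin edges verts S m conn by auto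
  then show ?thesis unfolding contains_copy_def by blast
qed


definition Inv2 :: "nat \<Rightarrow> nat set set \<Rightarrow> nat set set \<Rightarrow> (nat \<Rightarrow> nat) \<Rightarrow> (nat \<Rightarrow> bool) \<Rightarrow> nat set \<Rightarrow> nat \<Rightarrow> bool" where
  "Inv2 n R B cmp side S h \<longleftrightarrow> finite S \<and> card S = n \<and> h \<in> S \<and> (\<forall>w\<in>S-{h}. {h,w} \<in> B) \<and> RInv R cmp side"

lemma merge_card:
  assumes "u \<in> S" "v \<in> S" "cmp u \<noteq> cmp v" "finite S"
  shows "card ((\<lambda>z. if cmp z = cmp v then cmp u else cmp z) ` S) = card (cmp ` S) - 1"
proof -
  have "(\<lambda>z. if cmp z = cmp v then cmp u else cmp z) ` S = cmp ` S - {cmp v}"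
  proof
    show "(\<lambda>z. if cmp z = cmp v then cmp u else cmp z) ` S \<subseteq> cmp ` S - {cmp v}"
      using assms by auto
    show "cmp ` S - {cmp v} \<subseteq> (\<lambda>z. if cmp z = cmp v then cmp u else cmp z) ` S"
    proof
      fix c assume "c \<in> cmp ` S - {cmp v}"
      then obtain z where "z \<in> S" "c = cmp z" "cmp z \<noteq> cmp v" by auto
      then show "c \<in> (\<lambda>z. if cmp z = cmp v then cmp u else cmp z) ` S"
        by (intro image_eqI[of _ _ z]) auto
    qed
  qed
  then show ?thesis using assms by (simp add: card_Diff_singleton)
qed

lemma phase2:
  assumes n2: "n \<ge> 2" and m4: "4 * m \<le> (n - 1)^2"
  shows "Inv2 n R B cmp side S h \<Longrightarrow> k = card (cmp ` S) - 1 + (m - card (B \<inter> Pairs S))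
         \<Longrightarrow> builder_wins C_odd (Con n m) k R B"
proof (induction k arbitrary: R B cmp side rule: less_induct)
  case (less k R B cmp side)
  note inv = less.prems(1)[unfolded Inv2_def]
  have S: "finite S" "card S = n" "h \<in> S" "\<forall>w\<in>S-{h}. {h,w} \<in> B" and rinv: "RInv R cmp side"
    using inv by auto
  let ?b = "card (B \<inter> Pairs S)"
  show ?case
  proof (cases "m \<le> ?b")
    case True
    then show ?thesis by (intro builder_wins.ended disjI2 con_win[OF S(1,2) n2 S(3,4)])
  next
    case False
    then have bm: "?b < m" by simp
    obtain u v where uv: "u \<in> S" "v \<in> S" "u \<noteq> v" "side u = side v" "{u,v} \<notin> B"
      using count_move[OF S(1,2) m4 bm, of side] by blast
    let ?e = "{u,v}"
    have ise: "is_edge ?e" unfolding is_edge_def using uv by blast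
    have eR: "?e \<notin> R"
    proof
      assume "?e \<in> R"
      then obtain x y where "?e = {x,y}" "side x \<noteq> side y"
        using rinv[unfolded RInv_def, THEN conjunct1] by blast
      then show False using uv by (auto simp: doubleton_eq_iff)
    qed
    have eP: "?e \<in> Pairs S" using in_Pairs uv by blast
    have fin: "finite (B \<inter> Pairs S)" using finite_Pairs[OF S(1)] by simp
    have bc: "card (insert ?e B \<inter> Pairs S) = ?b + 1"
    proof -
      have "insert ?e B \<inter> Pairs S = insert ?e (B \<inter> Pairs S)" using eP by auto
      then show ?thesis using fin uv(5) by simp
    qed
    define k' where "k' = k - 1"
    have kk: "k = Suc k'" using less.prems(2) bm unfolding k'_def by simp
    have blue: "builder_wins C_odd (Con n m) k' R (insert ?e B)"
    proof (rule less.IH)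
      show "k' < k" using kk by simp
      show "Inv2 n R (insert ?e B) cmp side S h" using inv unfolding Inv2_def by auto
      show "k' = card (cmp ` S) - 1 + (m - card (insert ?e B \<inter> Pairs S))"
        using less.prems(2) bc bm kk by simp
    qed
    have red: "builder_wins C_odd (Con n m) k' (insert ?e R) B"
    proof (cases "cmp u = cmp v")
      case True
      then have "hasp R cmp side u v" using rinv unfolding RInv_def by blast
      then obtain ps where ps: "ps \<noteq> []" "distinct ps" "hd ps = u" "last ps = v"
        "successively (\<lambda>x y. {x,y} \<in> R) ps" "odd (length ps)"
        using uv(4) unfolding hasp_def by blast
      have "length ps \<noteq> 1"
      proof
        assume "length ps = 1"
        then obtain x where "ps = [x]" by (cases ps) auto
        then show False using ps uv by simp
      qed
      moreover have "length ps \<noteq> 0" using ps(1) by simp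
      ultimately have "length ps \<ge> 3" using ps(6) by presburger
      then have "contains_copy C_odd (insert ?e R)"
        using odd_cycle[OF ps(2,5,6)] ps(3,4) by simp
      then show ?thesis by (intro builder_wins.ended disjI1)
    next
      case False
      define cmp' where "cmp' = (\<lambda>z. if cmp z = cmp v then cmp u else cmp z)"
      define side' where "side' = (\<lambda>z. if cmp z = cmp v then (if side z = side v then \<not> side u else side u) else side z)"
      have ri: "RInv (insert ?e R) cmp' side'"
        unfolding cmp'_def side'_def by (rule merge_inv[OF rinv False])
      have cc: "card (cmp' ` S) = card (cmp ` S) - 1"
        unfolding cmp'_def by (rule merge_card[OF uv(1,2) False S(1)])
      have "card (cmp ` S) \<ge> 2"
      proof -
        have "{cmp u, cmp v} \<subseteq> cmp ` S" using uv by auto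
        then have "card {cmp u, cmp v} \<le> card (cmp ` S)" using S(1) by (intro card_mono) auto
        then show ?thesis using False by simp
      qed
      show ?thesis
      proof (rule less.IH)
        show "k' < k" using kk by simp
        show "Inv2 n (insert ?e R) B cmp' side' S h" using inv ri unfolding Inv2_def by auto
        show "k' = card (cmp' ` S) - 1 + (m - card (B \<inter> Pairs S))"
          using less.prems(2) cc kk \<open>card (cmp ` S) \<ge> 2\<close> by simp
      qed
    qed
    show ?thesis unfolding kk
      by (rule builder_wins.step[OF ise eR uv(5) red blue])
  qed
qed


definition star :: "nat \<Rightarrow> nat set \<Rightarrow> nat set set" where
  "star h A = (\<lambda>a. {h,a}) ` A"

definition cmp0 :: "nat set \<Rightarrow> nat \<Rightarrow> nat" where
  "cmp0 L z = (if z \<in> insert 0 L then 0 else Suc z)"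

definition side0 :: "nat \<Rightarrow> bool" where
  "side0 z = (z \<noteq> 0)"

lemma in_star: "{h,a} \<in> star h A \<longleftrightarrow> a \<in> A \<or> (a = h \<and> h \<in> A)"
  unfolding star_def by (auto simp: doubleton_eq_iff)

lemma init_rinv:
  assumes L0: "0 \<notin> L"
  shows "RInv (star 0 L) (cmp0 L) side0"
proof -
  have p1: "\<forall>e\<in>star 0 L. \<exists>x y. e = {x,y} \<and> cmp0 L x = cmp0 L y \<and> side0 x \<noteq> side0 y"
  proof
    fix e assume "e \<in> star 0 L"
    then obtain l where l: "l \<in> L" "e = {0,l}" unfolding star_def by auto
    then have "l \<noteq> 0" using L0 by auto
    then show "\<exists>x y. e = {x,y} \<and> cmp0 L x = cmp0 L y \<and> side0 x \<noteq> side0 y"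
      using l by (intro exI[of _ 0] exI[of _ l]) (simp add: cmp0_def side0_def)
  qed
  have p2: "hasp (star 0 L) (cmp0 L) side0 u v" if h: "cmp0 L u = cmp0 L v" for u v
  proof (cases "u = v")
    case True
    then show ?thesis unfolding hasp_def by (intro exI[of _ "[u]"]) simp
  next
    case False
    then have uv: "u \<in> insert 0 L" "v \<in> insert 0 L" using h by (auto simp: cmp0_def split: if_splits)
    have c: "cmp0 L z = 0" if "z \<in> insert 0 L" for z using that by (simp add: cmp0_def)
    have sL: "{0,l} \<in> star 0 L" "{l,0} \<in> star 0 L" if "l \<in> L" for l
      using that unfolding star_def by (auto simp: insert_commute)
    have nz: "l \<noteq> 0" if "l \<in> L" for l :: nat using that L0 by (cases "l = 0") simp_all
    consider "u = 0" "v \<in> L" | "u \<in> L" "v = 0" | "u \<in> L" "v \<in> L"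
      using uv False by auto
    then show ?thesis
    proof cases
      case 1
      then show ?thesis unfolding hasp_def using sL c uv L0 nz
        by (intro exI[of _ "[u,v]"]) (auto simp: side0_def)
    next
      case 2
      then show ?thesis unfolding hasp_def using sL c uv L0 nz
        by (intro exI[of _ "[u,v]"]) (auto simp: side0_def)
    next
      case 3
      then show ?thesis unfolding hasp_def using sL c uv L0 False nz
        by (intro exI[of _ "[u,0,v]"]) (auto simp: side0_def)
    qed
  qed
  show ?thesis unfolding RInv_def using p1 p2 by blast
qed

lemma forced_seq:
  "distinct E \<Longrightarrow> (\<forall>e\<in>set E. is_edge e \<and> e \<notin> R \<and> e \<notin> B \<and> contains_copy C_odd (insert e R))
   \<Longrightarrow> builder_wins C_odd H2 k R (B \<union> set E) \<Longrightarrow> builder_wins C_odd H2 (length E + k) R B"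
proof (induction E arbitrary: B)
  case Nil
  then show ?case by simp
next
  case (Cons e E)
  have red: "builder_wins C_odd H2 (length E + k) (insert e R) B"
    using Cons.prems(2) by (intro builder_wins.ended disjI1) simp
  have blue: "builder_wins C_odd H2 (length E + k) R (insert e B)"
  proof (rule Cons.IH)
    show "distinct E" using Cons.prems(1) by simp
    show "\<forall>e'\<in>set E. is_edge e' \<and> e' \<notin> R \<and> e' \<notin> insert e B \<and> contains_copy C_odd (insert e' R)"
      using Cons.prems(1,2) by auto
    show "builder_wins C_odd H2 k R (insert e B \<union> set E)"
      using Cons.prems(3) by (simp add: insert_commute)
  qed
  show ?case using Cons.prems(2) by (simp add: builder_wins.step[OF _ _ _ red blue])
qed

lemma star_inj: "card (star h A) = card A" if "h \<notin> A" for h A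
  unfolding star_def
proof (rule card_image)
  show "inj_on (\<lambda>a. {h, a}) A" unfolding inj_on_def using that by (auto simp: doubleton_eq_iff)
qed

lemma Lcase:
  assumes n2: "n \<ge> 2" and m4: "4 * m \<le> (n - 1)^2" and mn: "n - 1 \<le> m"
    and L: "finite L" "card L = n" "0 \<notin> L" and W0: "0 \<notin> W"
  shows "builder_wins C_odd (Con n m) m (star 0 L) (star 0 W)"
proof -
  obtain t0 where t0: "t0 \<in> L" using L n2 by fastforce
  have t00: "t0 \<noteq> 0" using t0 L(3) by metis
  define A where "A = star t0 (L - {t0})"
  obtain E where E: "set E = A" "distinct E"
    using finite_distinct_list[of A] L(1) unfolding A_def star_def by auto
  have lenE: "length E = n - 1"
  proof -
    have "length E = card A" using E distinct_card by metis
    also have "\<dots> = card (L - {t0})" unfolding A_def by (rule star_inj) simp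
    also have "\<dots> = n - 1" using L t0 by simp
    finally show ?thesis .
  qed
  have forced: "\<forall>e\<in>set E. is_edge e \<and> e \<notin> star 0 L \<and> e \<notin> star 0 W \<and> contains_copy C_odd (insert e (star 0 L))"
  proof
    fix e assume "e \<in> set E"
    then obtain l where l: "l \<in> L" "l \<noteq> t0" "e = {t0,l}" using E unfolding A_def star_def by auto
    have l0: "l \<noteq> 0" using l L by auto
    have "is_edge e" unfolding is_edge_def using l by blast
    moreover have "e \<notin> star 0 L" "e \<notin> star 0 W" using l t00 l0 unfolding star_def by (auto simp: doubleton_eq_iff)
    moreover have "contains_copy C_odd (insert e (star 0 L))"
    proof -
      have "distinct [t0, 0, l]" using l t00 l0 by auto
      moreover have "successively (\<lambda>x y. {x,y} \<in> star 0 L) [t0, 0, l]"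
        using l t0 unfolding star_def by (auto simp: insert_commute)
      ultimately have "contains_copy C_odd (insert {hd [t0,0,l], last [t0,0,l]} (star 0 L))"
        by (intro odd_cycle) auto
      then show ?thesis using l by simp
    qed
    ultimately show "is_edge e \<and> e \<notin> star 0 L \<and> e \<notin> star 0 W \<and> contains_copy C_odd (insert e (star 0 L))"
      by blast
  qed
  let ?B' = "star 0 W \<union> set E"
  define k2 where "k2 = card (cmp0 L ` L) - 1 + (m - card (?B' \<inter> Pairs L))"
  have inv: "Inv2 n (star 0 L) ?B' (cmp0 L) side0 L t0"
    unfolding Inv2_def
  proof (intro conjI)
    show "finite L" "card L = n" "t0 \<in> L" using L t0 by auto
    show "\<forall>w\<in>L - {t0}. {t0, w} \<in> ?B'" using E unfolding A_def star_def by auto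
    show "RInv (star 0 L) (cmp0 L) side0" using init_rinv L(3) .
  qed
  have "builder_wins C_odd (Con n m) k2 (star 0 L) ?B'"
    using phase2[OF n2 m4 inv] k2_def by simp
  then have w1: "builder_wins C_odd (Con n m) (length E + k2) (star 0 L) (star 0 W)"
    by (rule forced_seq[OF E(2) forced])
  have "cmp0 L ` L \<subseteq> {0}" unfolding cmp0_def by auto
  then have c1: "card (cmp0 L ` L) \<le> 1" using card_mono[of "{0}" "cmp0 L ` L"] by simp
  have "set E \<subseteq> ?B' \<inter> Pairs L"
    using E unfolding A_def star_def Pairs_def using t0 by (auto simp: card_2_iff)
  then have "card (set E) \<le> card (?B' \<inter> Pairs L)"
    using finite_Pairs[OF L(1)] by (intro card_mono) auto
  then have c2: "n - 1 \<le> card (?B' \<inter> Pairs L)" using lenE E(2) distinct_card by metis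
  have "length E + k2 \<le> m" unfolding k2_def using c1 c2 lenE mn by linarith
  then show ?thesis using bw_mono[OF w1] by blast
qed

lemma Wcase:
  assumes n2: "n \<ge> 2" and m4: "4 * m \<le> (n - 1)^2" and mn: "n - 1 \<le> m"
    and W: "finite W" "card W = n - 1" "0 \<notin> W" and L0: "0 \<notin> L"
  shows "builder_wins C_odd (Con n m) m (star 0 L) (star 0 W)"
proof -
  let ?S = "insert 0 W"
  have cS: "card ?S = n" using W n2 by simp
  have inv: "Inv2 n (star 0 L) (star 0 W) (cmp0 L) side0 ?S 0"
    unfolding Inv2_def
  proof (intro conjI)
    show "finite ?S" "card ?S = n" "0 \<in> ?S" using W cS by auto
    show "\<forall>w\<in>?S - {0}. {0, w} \<in> star 0 W" unfolding star_def by auto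
    show "RInv (star 0 L) (cmp0 L) side0" using init_rinv L0 .
  qed
  define k2 where "k2 = card (cmp0 L ` ?S) - 1 + (m - card (star 0 W \<inter> Pairs ?S))"
  have w1: "builder_wins C_odd (Con n m) k2 (star 0 L) (star 0 W)"
    using phase2[OF n2 m4 inv] k2_def by simp
  have c1: "card (cmp0 L ` ?S) \<le> n" using card_image_le[of ?S "cmp0 L"] W cS by simp
  have "star 0 W \<subseteq> Pairs ?S"
  proof
    fix e assume "e \<in> star 0 W"
    then obtain a where a: "a \<in> W" "e = {0,a}" unfolding star_def by auto
    then have "a \<noteq> 0" using W(3) by metis
    then show "e \<in> Pairs ?S" using a in_Pairs[of 0 ?S a] by simp
  qed
  then have "star 0 W \<inter> Pairs ?S = star 0 W" by blast
  then have c2: "card (star 0 W \<inter> Pairs ?S) = n - 1" using star_inj[of 0 W] W by simp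
  have "k2 \<le> m" unfolding k2_def using c1 c2 mn by linarith
  then show ?thesis using bw_mono[OF w1] by blast
qed

lemma phase1:
  assumes n2: "n \<ge> 2" and m4: "4 * m \<le> (n - 1)^2" and mn: "n - 1 \<le> m"
  shows "j + t = 2 * n - 2 \<Longrightarrow> L \<union> W = {1..j} \<Longrightarrow> L \<inter> W = {} \<Longrightarrow> card L \<le> n \<Longrightarrow> card W \<le> n - 1
    \<Longrightarrow> builder_wins C_odd (Con n m) (m + t) (star 0 L) (star 0 W)"
proof (induction t arbitrary: j L W)
  case (0 j L W)
  have fin: "finite L" "finite W" using "0.prems"(2) by (metis finite_Un finite_atLeastAtMost)+
  have "0 \<notin> {1..j}" by simp
  then have z: "0 \<notin> L" "0 \<notin> W" using "0.prems"(2) by blast+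
  have "card L + card W = j" using card_Un_disjoint[OF fin "0.prems"(3)] "0.prems"(2) by simp
  then have "card L = n \<or> card W = n - 1" using "0.prems" by linarith
  then show ?case
    using Lcase[OF n2 m4 mn fin(1) _ z] Wcase[OF n2 m4 mn fin(2) _ z(2) z(1)] by auto
next
  case (Suc t j L W)
  have fin: "finite L" "finite W" using Suc.prems(2) by (metis finite_Un finite_atLeastAtMost)+
  have "0 \<notin> {1..j}" by simp
  then have z: "0 \<notin> L" "0 \<notin> W" using Suc.prems(2) by blast+
  show ?case
  proof (cases "card L = n \<or> card W = n - 1")
    case True
    then have "builder_wins C_odd (Con n m) m (star 0 L) (star 0 W)"
      using Lcase[OF n2 m4 mn fin(1) _ z] Wcase[OF n2 m4 mn fin(2) _ z(2) z(1)] by auto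
    then show ?thesis using bw_mono by fastforce
  next
    case False
    let ?y = "Suc j"
    let ?e = "{0, ?y}"
    have "?y \<notin> {1..j}" by simp
    then have yL: "?y \<notin> L" "?y \<notin> W" using Suc.prems(2) by blast+
    have ise: "is_edge ?e" unfolding is_edge_def by blast
    have eL: "?e \<notin> star 0 L" using yL unfolding star_def by (auto simp: doubleton_eq_iff)
    have eW: "?e \<notin> star 0 W" using yL unfolding star_def by (auto simp: doubleton_eq_iff)
    have cLW: "card L + card W = j" using card_Un_disjoint[OF fin Suc.prems(3)] Suc.prems(2) by simp
    have un: "{1..Suc j} = insert ?y {1..j}" by auto
    have red: "builder_wins C_odd (Con n m) (m + t) (insert ?e (star 0 L)) (star 0 W)"
    proof -
      have "builder_wins C_odd (Con n m) (m + t) (star 0 (insert ?y L)) (star 0 W)"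
      proof (rule Suc.IH)
        show "Suc j + t = 2 * n - 2" using Suc.prems(1) by simp
        show "insert ?y L \<union> W = {1..Suc j}" using Suc.prems(2) un by auto
        show "insert ?y L \<inter> W = {}" using Suc.prems(3) yL by auto
        show "card (insert ?y L) \<le> n" using False Suc.prems(4) fin yL by simp
        show "card W \<le> n - 1" using Suc.prems(5) .
      qed
      then show ?thesis unfolding star_def by simp
    qed
    have blue: "builder_wins C_odd (Con n m) (m + t) (star 0 L) (insert ?e (star 0 W))"
    proof -
      have "builder_wins C_odd (Con n m) (m + t) (star 0 L) (star 0 (insert ?y W))"
      proof (rule Suc.IH)
        show "Suc j + t = 2 * n - 2" using Suc.prems(1) by simp
        show "L \<union> insert ?y W = {1..Suc j}" using Suc.prems(2) un by auto
        show "L \<inter> insert ?y W = {}" using Suc.prems(3) yL by auto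
        show "card L \<le> n" using Suc.prems(4) .
        show "card (insert ?y W) \<le> n - 1" using False Suc.prems(5) fin yL by simp
      qed
      then show ?thesis unfolding star_def by simp
    qed
    have "builder_wins C_odd (Con n m) (Suc (m + t)) (star 0 L) (star 0 W)"
      by (rule builder_wins.step[OF ise eL eW red blue])
    then show ?thesis by simp
  qed
qed


lemma main_nm:
  fixes n m :: nat
  assumes n3: "n \<ge> 3" and mn: "n - 1 \<le> m" and mr: "real m \<le> (real n - 1)^2 / 4"
  shows "(\<exists>k. builder_wins C_odd (Con n m) k {} {}) \<and>
        real (online_ramsey C_odd (Con n m))
          \<le> real n + 2 * real m + 1 * sqrt (real m - real n + 1)"
proof (rule conjI)
  have n2: "n \<ge> 2" using n3 by simp
  have e: "(real n - 1)^2 = real ((n - 1)^2)" using n3 by (simp add: of_nat_diff)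
  have "4 * real m \<le> (real n - 1)^2" using mr by simp
  then have "real (4 * m) \<le> real ((n - 1)^2)" unfolding e by simp
  then have m4: "4 * m \<le> (n - 1)^2" by (simp only: of_nat_le_iff)
  have "builder_wins C_odd (Con n m) (m + (2 * n - 2)) (star 0 {}) (star 0 {})"
    by (rule phase1[OF n2 m4 mn, where j=0 and t="2*n-2" and L="{}" and W="{}"]) auto
  then have bw: "builder_wins C_odd (Con n m) (m + (2 * n - 2)) {} {}" by (simp add: star_def)
  then show "\<exists>k. builder_wins C_odd (Con n m) k {} {}" by blast
  have "online_ramsey C_odd (Con n m) \<le> m + (2 * n - 2)"
    unfolding online_ramsey_def by (rule Least_le) (rule bw)
  then have "real (online_ramsey C_odd (Con n m)) \<le> real (m + (2 * n - 2))" by (simp only: of_nat_le_iff)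
  also have "\<dots> \<le> real n + 2 * real m"
  proof -
    have "m + (2 * n - 2) \<le> n + 2 * m" using mn n3 by linarith
    then have "real (m + (2 * n - 2)) \<le> real (n + 2 * m)" by (simp only: of_nat_le_iff)
    then show ?thesis by simp
  qed
  also have "\<dots> \<le> real n + 2 * real m + 1 * sqrt (real m - real n + 1)"
  proof -
    have "real (n - 1) \<le> real m" using mn by (simp only: of_nat_le_iff)
    moreover have "real (n - 1) = real n - 1" using n3 by (simp add: of_nat_diff)
    ultimately have "real m - real n + 1 \<ge> 0" by linarith
    then have "sqrt (real m - real n + 1) \<ge> 0" by simp
    then show ?thesis by linarith
  qed
  finally show "real (online_ramsey C_odd (Con n m)) \<le> real n + 2 * real m + 1 * sqrt (real m - real n + 1)" .
qed

theorem theorem3: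
  "\<exists>C::real. C > 0 \<and>
     (\<forall>n m :: nat. n \<ge> 3 \<longrightarrow> n - 1 \<le> m \<longrightarrow> real m \<le> (real n - 1)^2 / 4 \<longrightarrow>
        (\<exists>k. builder_wins C_odd (Con n m) k {} {}) \<and>
        real (online_ramsey C_odd (Con n m))
          \<le> real n + 2 * real m + C * sqrt (real m - real n + 1))"
  using main_nm by (intro exI[of _ 1]) auto

end
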